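(* Every Collatz trajectory $(n,C(n),C^2(n),\dots)$, $n\in\mathbb{N}^+$, that does not contain $1$ contains some element $m\equiv 6\pmod 8$.
   Context: $C:\mathbb{N}^+\to\mathbb{N}^+$ is the Collatz function $C(n)=n/2$ for $n$ even and $C(n)=3n+1$ for $n$ odd. *)

theory Defs
  imports Main
begin

definition collatz :: "nat \<Rightarrow> nat" where
  "collatz n = (if even n then n div 2 else 3 * n + 1)"

end

theory Submission
  imports Defs
begin

lemma key:
  "0 < x \<Longrightarrow> (even x \<or> x mod 4 = 1) \<Longrightarrow>
   \<exists>k. (collatz^^k) x = 1 \<or> (collatz^^k) x mod 8 = 6"
proof (induction x rule: less_induct)
  case (less x)
  show ?case
  proof (cases "x = 1")
    case True then show ?thesis by (intro exI[of _ 0]) simp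
  next
    case ne1: False
    show ?thesis
    proof (cases "even x")
      case ev: True
      show ?thesis
      proof (cases "x mod 8 = 6")
        case True then show ?thesis by (intro exI[of _ 0]) simp
      next
        case False
        define y where "y = x div 2"
        have c: "collatz x = y" using ev by (simp add: collatz_def y_def)
        have "y < x" "0 < y" using less.prems ev by (auto simp: y_def elim!: evenE)
        moreover have "even y \<or> y mod 4 = 1" using False ev unfolding y_def by presburger
        ultimately obtain k where k: "(collatz^^k) y = 1 \<or> (collatz^^k) y mod 8 = 6"
          using less.IH by blast
        have "(collatz^^Suc k) x = (collatz^^k) y" by (simp only: funpow_Suc_right o_apply c)
        with k show ?thesis by metis
      qed
    next
      case od: False
      with less.prems have m: "x mod 4 = 1" by blast
      define w where "w = (3*x+1) div 4"
      have c1: "collatz x = 3*x+1" using od by (simp add: collatz_def)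
      have h2: "even (3*x+1) \<and> (3*x+1) div 2 = 2*w" using m unfolding w_def by presburger
      have c2: "collatz (3*x+1) = 2*w" using h2 unfolding collatz_def by (simp only: if_True)
      have c3: "collatz (2*w) = w" by (simp add: collatz_def)
      have e2: "(collatz^^2) x = 2*w" by (simp only: numeral_2_eq_2 funpow.simps o_apply id_apply c1 c2)
      have e3: "(collatz^^Suc 2) x = w" by (simp only: funpow.simps o_apply e2 c3)
      show ?thesis
      proof (cases "even w \<or> w mod 4 = 1")
        case False
        then have "(2*w) mod 8 = 6" by presburger
        then show ?thesis using e2 by metis
      next
        case True
        have "w < x" "0 < w" using m ne1 less.prems unfolding w_def by presburger+
        with True obtain k where k: "(collatz^^k) w = 1 \<or> (collatz^^k) w mod 8 = 6"
          using less.IH by blast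
        have "(collatz^^(k+Suc 2)) x = (collatz^^k) w"
          by (simp only: funpow_add o_apply e3)
        with k show ?thesis by metis
      qed
    qed
  qed
qed

theorem mainTheorem14:
  fixes n :: nat
  assumes "n > 0"
    and "\<forall>k. (collatz ^^ k) n \<noteq> 1"
  shows "\<exists>k. (collatz ^^ k) n mod 8 = 6"
proof (cases "even n \<or> n mod 4 = 1")
  case True
  then show ?thesis using key[OF assms(1) True] assms(2) by blast
next
  case False
  then have c: "collatz n = 3*n+1" by (simp add: collatz_def)
  have "even (3*n+1)" using False by presburger
  then obtain k where k: "(collatz^^k) (3*n+1) = 1 \<or> (collatz^^k) (3*n+1) mod 8 = 6"
    using key[of "3*n+1"] by auto
  have "(collatz^^Suc k) n = (collatz^^k) (3*n+1)" by (simp only: funpow_Suc_right o_apply c)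
  with k assms(2) show ?thesis by metis
qed

end
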